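(* Let $n\ge2$, $q_1,q_2\in\mathbb{C}$ with $q_1q_2\ne0$ and $q_1\ne q_2$, and $q=-q_2/q_1$. Let $J=\mathrm{diag}(1,q,\dots,q^{n-1})$ and, for $1\le i\le n-1$, $S_i=\frac{1}{q_1-q_2}\bigl(2\beta_i-(q_1+q_2)I_n\bigr)$, where $\beta_i$ is the matrix of $T_i$ on $\mathbf{E}$. Then $S_i^{\mathsf T}JS_i=J$ (so $S_i$ preserves the form $\langle-,-\rangle$). Moreover, with $f_0=e_1+\cdots+e_n$, $f_i=q_2e_i+q_1e_{i+1}$ and $\mathbf{L}^\perp=\{v\in\mathbf{E}:\langle v,f_0\rangle=0\}$, for each $i=1,\dots,n-1$: (a) $S_if_0=f_0$; (b) $f_i\in\mathbf{L}^\perp$; (c) $\mathbf{L}^\perp$ is an $H_n(q_1,q_2)$-submodule of $\mathbf{E}$; (d) $\mathbf{F}=\mathbf{L}^\perp$, where $\mathbf{F}=\mathrm{span}(f_1,\dots,f_{n-1})$.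
   Context: The Iwahori--Hecke algebra $H_n(q_1,q_2)$ is generated by $T_1,\dots,T_{n-1}$ subject to $T_iT_{i+1}T_i=T_{i+1}T_iT_{i+1}$, $T_iT_j=T_jT_i$ ($|i-j|>1$) and $(T_i-q_1)(T_i-q_2)=0$. It acts on $\mathbf{E}=\mathbb{C}^n$ (basis $e_1,\dots,e_n$) by $T_ie_j=q_1e_j$ ($j\ne i,i+1$), $T_ie_{i+1}=-q_2e_i$, $T_ie_i=(q_1+q_2)e_i+q_1e_{i+1}$ (generalized Burau representation). The symmetric bilinear form on $\mathbf{E}$ is $\langle e_i,e_j\rangle=\delta_{ij}q^{j-1}$, with Gram matrix $J$. *)

theory Defs
  imports "Jordan_Normal_Form.VS_Connect"
begin

(* Vectors of E = C^n are complex vec of dimension n; basis vector e_j (j = 1..n)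
   is unit_vec n (j-1), i.e. we use 0-based indices internally. *)

definition hq :: "complex \<Rightarrow> complex \<Rightarrow> complex" where
  "hq q1 q2 = - q2 / q1"

(* Matrix beta_i of T_i on E (generalized Burau representation), i in {1..n-1};
   column c holds the coordinates of T_i e_(c+1). *)
definition burau :: "nat \<Rightarrow> complex \<Rightarrow> complex \<Rightarrow> nat \<Rightarrow> complex mat" where
  "burau n q1 q2 i = mat n n (\<lambda>(r, c).
     if c = i - 1 then (if r = i - 1 then q1 + q2 else if r = i then q1 else 0)
     else if c = i then (if r = i - 1 then - q2 else 0)
     else (if r = c then q1 else 0))"

definition gram :: "nat \<Rightarrow> complex \<Rightarrow> complex mat" where
  "gram n q = mat n n (\<lambda>(r, c). if r = c then q ^ r else 0)"

definition bform :: "nat \<Rightarrow> complex \<Rightarrow> complex vec \<Rightarrow> complex vec \<Rightarrow> complex" where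
  "bform n q v w = v \<bullet> (gram n q *\<^sub>v w)"

definition Smat :: "nat \<Rightarrow> complex \<Rightarrow> complex \<Rightarrow> nat \<Rightarrow> complex mat" where
  "Smat n q1 q2 i = (1 / (q1 - q2)) \<cdot>\<^sub>m (2 \<cdot>\<^sub>m burau n q1 q2 i - (q1 + q2) \<cdot>\<^sub>m 1\<^sub>m n)"

definition ebas :: "nat \<Rightarrow> nat \<Rightarrow> complex vec" where
  "ebas n j = unit_vec n (j - 1)"

definition f0 :: "nat \<Rightarrow> complex vec" where
  "f0 n = vec n (\<lambda>_. 1)"

definition fvec :: "nat \<Rightarrow> complex \<Rightarrow> complex \<Rightarrow> nat \<Rightarrow> complex vec" where
  "fvec n q1 q2 i = q2 \<cdot>\<^sub>v ebas n i + q1 \<cdot>\<^sub>v ebas n (i + 1)"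

definition Lperp :: "nat \<Rightarrow> complex \<Rightarrow> complex vec set" where
  "Lperp n q = {v \<in> carrier_vec n. bform n q v (f0 n) = 0}"

definition Fspan :: "nat \<Rightarrow> complex \<Rightarrow> complex \<Rightarrow> complex vec set" where
  "Fspan n q1 q2 = LinearCombinations.module.span class_ring (module_vec TYPE(complex) n) (fvec n q1 q2 ` {1..<n})"

end

theory Submission imports Defs begin

lemma sum_one:
  assumes "a < (n::nat)" "\<And>k. k < n \<Longrightarrow> k \<noteq> a \<Longrightarrow> f k = 0"
  shows "sum f {0..<n} = (f a :: 'b::comm_monoid_add)"
proof -
  have "sum f {0..<n} = sum f {a}"
    by (rule sum.mono_neutral_right) (use assms in auto)
  then show ?thesis by simp
qed

lemma sum_two:
  assumes "a < (n::nat)" "b < n" "a \<noteq> b" "\<And>k. k < n \<Longrightarrow> k \<noteq> a \<Longrightarrow> k \<noteq> b \<Longrightarrow> f k = 0"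
  shows "sum f {0..<n} = (f a + f b :: 'b::comm_monoid_add)"
proof -
  have "sum f {0..<n} = sum f {a,b}"
    by (rule sum.mono_neutral_right) (use assms in auto)
  then show ?thesis using assms by simp
qed

lemma gram_right:
  assumes "A \<in> carrier_mat n n" "r < n" "k < n"
  shows "(A * gram n q) $$ (r,k) = A $$ (r,k) * q ^ k"
  using assms unfolding gram_def
  by (auto simp: scalar_prod_def; subst sum_one[where a=k]; auto)

lemma Smat_idx:
  assumes "r < n" "c < n" "1 \<le> i" "i < n" "q1 \<noteq> q2"
  shows "Smat n q1 q2 i $$ (r,c) =
    (if r = i - 1 \<and> c = i - 1 then (q1+q2)/(q1-q2)
     else if r = i - 1 \<and> c = i then -2*q2/(q1-q2)
     else if r = i \<and> c = i - 1 then 2*q1/(q1-q2)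
     else if r = i \<and> c = i then -(q1+q2)/(q1-q2)
     else if r = c then 1 else 0)" (is "_ = ?rhs")
proof -
  have d: "q1 - q2 \<noteq> 0" using assms by simp
  have "Smat n q1 q2 i $$ (r,c) = (1/(q1-q2)) * (2 * burau n q1 q2 i $$ (r,c) - (q1+q2) * (if r = c then 1 else 0))"
    using assms unfolding Smat_def by (simp add: burau_def)
  also have "\<dots> = ?rhs" unfolding burau_def using assms d
    by (simp add: divide_simps; simp add: algebra_simps)
  finally show ?thesis .
qed

lemma A1: fixes q1 q2 p d q :: complex assumes "q1 \<noteq> 0" "d \<noteq> 0" "d = q1 - q2" "q = -q2/q1"
  shows "(q1+q2)/d * p * ((q1+q2)/d) + 2*q1/d * (p*q) * (2*q1/d) = p"
proof -
  have "(q1+q2)/d * p * ((q1+q2)/d) + 2*q1/d * (p*q) * (2*q1/d) = p * ((q1+q2)^2 - 4*q1*q2) / d^2"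
    unfolding assms(4) using assms(1,2) by (simp add: field_simps power2_eq_square)
  also have "(q1+q2)^2 - 4*q1*q2 = d^2" unfolding assms(3) by (simp add: power2_eq_square algebra_simps)
  finally show ?thesis using assms(2) by simp
qed
lemma A2: fixes q1 q2 p d q :: complex assumes "q1 \<noteq> 0" "d \<noteq> 0" "d = q1 - q2" "q = -q2/q1"
  shows "(q1+q2)/d * p * (-2*q2/d) + 2*q1/d * (p*q) * (-(q1+q2)/d) = 0"
  unfolding assms(4) using assms(1,2) by (simp add: field_simps)
lemma A2': fixes q1 q2 p d q :: complex assumes "q1 \<noteq> 0" "d \<noteq> 0" "d = q1 - q2" "q = -q2/q1"
  shows "(-2*q2/d) * p * ((q1+q2)/d) + (-(q1+q2)/d) * (p*q) * (2*q1/d) = 0"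
  unfolding assms(4) using assms(1,2) by (simp add: field_simps)
lemma A3: fixes q1 q2 p d q :: complex assumes "q1 \<noteq> 0" "d \<noteq> 0" "d = q1 - q2" "q = -q2/q1"
  shows "(-2*q2/d) * p * (-2*q2/d) + (-(q1+q2)/d) * (p*q) * (-(q1+q2)/d) = p * q"
proof -
  have "(-2*q2/d) * p * (-2*q2/d) + (-(q1+q2)/d) * (p*q) * (-(q1+q2)/d) = p * q * ((q1+q2)^2 - 4*q1*q2) / d^2"
    unfolding assms(4) using assms(1,2) by (simp add: field_simps power2_eq_square)
  also have "(q1+q2)^2 - 4*q1*q2 = d^2" unfolding assms(3) by (simp add: power2_eq_square algebra_simps)
  finally show ?thesis using assms(2) by simp
qed

lemma Smat_carrier: "Smat n q1 q2 i \<in> carrier_mat n n"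
  unfolding Smat_def burau_def by (intro smult_carrier_mat minus_carrier_mat add_carrier_mat) auto

lemma part1:
  assumes q1: "q1 \<noteq> 0" and q2: "q2 \<noteq> 0" and d: "q1 \<noteq> q2" and i: "1 \<le> i" "i < n"
    and q: "q = hq q1 q2"
  shows "(Smat n q1 q2 i)\<^sup>T * gram n q * Smat n q1 q2 i = gram n q"
proof (rule eq_matI)
  show "dim_row ((Smat n q1 q2 i)\<^sup>T * gram n q * Smat n q1 q2 i) = dim_row (gram n q)"
    "dim_col ((Smat n q1 q2 i)\<^sup>T * gram n q * Smat n q1 q2 i) = dim_col (gram n q)"
    by (simp_all add: gram_def Smat_def burau_def)
  fix r c assume rc: "r < dim_row (gram n q)" "c < dim_col (gram n q)"
  then have r: "r < n" and c: "c < n" by (simp_all add: gram_def)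
  define S where "S = Smat n q1 q2 i"
  have SC: "S \<in> carrier_mat n n" "S\<^sup>T \<in> carrier_mat n n" unfolding S_def using Smat_carrier by auto
  have "(S\<^sup>T * gram n q * S) $$ (r,c) = (\<Sum>k\<in>{0..<n}. (S\<^sup>T * gram n q) $$ (r,k) * S $$ (k,c))"
    using SC r c by (simp add: gram_def scalar_prod_def)
  also have "\<dots> = (\<Sum>k\<in>{0..<n}. S $$ (k,r) * q ^ k * S $$ (k,c))"
    by (rule sum.cong) (use SC r in \<open>auto simp: gram_right\<close>)
  also have "\<dots> = gram n q $$ (r,c)"
  proof (cases "r = i - 1 \<or> r = i")
    case True
    have "(\<Sum>k\<in>{0..<n}. S $$ (k,r) * q ^ k * S $$ (k,c)) =
       S $$ (i-1,r) * q ^ (i-1) * S $$ (i-1,c) + S $$ (i,r) * q ^ i * S $$ (i,c)"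
      by (rule sum_two) (use i True r in \<open>auto simp: S_def Smat_idx[OF _ _ i d]\<close>)
    also have "\<dots> = gram n q $$ (r,c)"
    proof -
      have qi: "q ^ i = q ^ (i-1) * q" using i by (cases i) auto
      have qq: "q = - q2 / q1" using q by (simp add: hq_def)
      have dd: "q1 - q2 \<noteq> 0" using d by simp
      have d0: "q1 - q2 \<noteq> 0" using d by simp
      have ii: "i - 1 < n" "i - 1 \<noteq> i" using i by auto
      have e11: "S $$ (i-1,i-1) = (q1+q2)/(q1-q2)" unfolding S_def using ii i by (simp add: Smat_idx[OF _ _ i d])
      have e12: "S $$ (i-1,i) = -2*q2/(q1-q2)" unfolding S_def using ii i by (simp add: Smat_idx[OF _ _ i d])
      have e21: "S $$ (i,i-1) = 2*q1/(q1-q2)" unfolding S_def using ii i by (simp add: Smat_idx[OF _ _ i d])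
      have e22: "S $$ (i,i) = -(q1+q2)/(q1-q2)" unfolding S_def using ii i by (simp add: Smat_idx[OF _ _ i d])
      have g: "gram n q $$ (r,c) = (if r = c then q^r else 0)" using r c by (simp add: gram_def)
      consider "r = i - 1" "c = i - 1" | "r = i - 1" "c = i" | "r = i" "c = i - 1" | "r = i" "c = i"
        | "c \<noteq> i - 1" "c \<noteq> i" using True by auto
      then show ?thesis
      proof cases
        case 1
        have "S $$ (i-1,r) * q ^ (i-1) * S $$ (i-1,c) + S $$ (i,r) * q ^ i * S $$ (i,c)
          = (q1+q2)/(q1-q2) * q^(i-1) * ((q1+q2)/(q1-q2)) + 2*q1/(q1-q2) * (q^(i-1)*q) * (2*q1/(q1-q2))"
          by (simp only: 1 e11 e21 qi)
        also have "\<dots> = q^(i-1)" by (rule A1[OF q1 d0 refl qq])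
        finally show ?thesis using 1 g by simp
      next
        case 2
        have "S $$ (i-1,r) * q ^ (i-1) * S $$ (i-1,c) + S $$ (i,r) * q ^ i * S $$ (i,c)
          = (q1+q2)/(q1-q2) * q^(i-1) * (-2*q2/(q1-q2)) + 2*q1/(q1-q2) * (q^(i-1)*q) * (-(q1+q2)/(q1-q2))"
          by (simp only: 2 e11 e21 e12 e22 qi)
        also have "\<dots> = 0" by (rule A2[OF q1 d0 refl qq])
        finally show ?thesis using 2 g ii by simp
      next
        case 3
        have "S $$ (i-1,r) * q ^ (i-1) * S $$ (i-1,c) + S $$ (i,r) * q ^ i * S $$ (i,c)
          = (-2*q2/(q1-q2)) * q^(i-1) * ((q1+q2)/(q1-q2)) + (-(q1+q2)/(q1-q2)) * (q^(i-1)*q) * (2*q1/(q1-q2))"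
          by (simp only: 3 e11 e21 e12 e22 qi)
        also have "\<dots> = 0" by (rule A2'[OF q1 d0 refl qq])
        finally show ?thesis using 3 g ii by simp
      next
        case 4
        have "S $$ (i-1,r) * q ^ (i-1) * S $$ (i-1,c) + S $$ (i,r) * q ^ i * S $$ (i,c)
          = (-2*q2/(q1-q2)) * q^(i-1) * (-2*q2/(q1-q2)) + (-(q1+q2)/(q1-q2)) * (q^(i-1)*q) * (-(q1+q2)/(q1-q2))"
          by (simp only: 4 e11 e21 e12 e22 qi)
        also have "\<dots> = q^(i-1) * q" by (rule A3[OF q1 d0 refl qq])
        finally show ?thesis using 4 g ii qi by simp
      next
        case 5
        have "S $$ (i-1,c) = 0" "S $$ (i,c) = 0" unfolding S_def using ii i c 5 by (simp_all add: Smat_idx[OF _ _ i d])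
        then show ?thesis using 5 g True by auto
      qed
    qed
    finally show ?thesis .
  next
    case False
    have "(\<Sum>k\<in>{0..<n}. S $$ (k,r) * q ^ k * S $$ (k,c)) = S $$ (r,r) * q ^ r * S $$ (r,c)"
      by (rule sum_one) (use i False r in \<open>auto simp: S_def Smat_idx[OF _ _ i d]\<close>)
    moreover have "S $$ (r,r) = 1" "S $$ (r,c) = (if r = c then 1 else 0)"
      unfolding S_def using False r c by (simp_all add: Smat_idx[OF _ _ i d])
    ultimately show ?thesis using r c by (simp add: gram_def)
  qed
  finally show "((Smat n q1 q2 i)\<^sup>T * gram n q * Smat n q1 q2 i) $$ (r,c) = gram n q $$ (r,c)"
    unfolding S_def .
qed

lemma B1: fixes q1 q2 d :: complex assumes "d \<noteq> 0" "d = q1 - q2"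
  shows "(q1+q2)/d + -2*q2/d = 1"
proof -
  have "(q1+q2)/d + -2*q2/d = (q1 - q2)/d" using assms(1) by (simp add: field_simps)
  then show ?thesis using assms by simp
qed

lemma B2: fixes q1 q2 d :: complex assumes "d \<noteq> 0" "d = q1 - q2"
  shows "2*q1/d + -(q1+q2)/d = 1"
proof -
  have "2*q1/d + -(q1+q2)/d = (q1 - q2)/d" using assms(1) by (simp add: field_simps)
  then show ?thesis using assms by simp
qed

lemma part2:
  assumes d: "q1 \<noteq> q2" and i: "1 \<le> i" "i < n"
  shows "Smat n q1 q2 i *\<^sub>v f0 n = f0 n"
proof (rule eq_vecI)
  show "dim_vec (Smat n q1 q2 i *\<^sub>v f0 n) = dim_vec (f0 n)"
    using Smat_carrier[of n q1 q2 i] by (simp add: f0_def)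
  fix r assume "r < dim_vec (f0 n)"
  then have r: "r < n" by (simp add: f0_def)
  define S where "S = Smat n q1 q2 i"
  have SC: "S \<in> carrier_mat n n" unfolding S_def by (rule Smat_carrier)
  have ii: "i - 1 < n" "i - 1 \<noteq> i" using i by auto
  have d0: "q1 - q2 \<noteq> 0" using d by simp
  have "(S *\<^sub>v f0 n) $ r = (\<Sum>c\<in>{0..<n}. S $$ (r,c))"
    using SC r by (simp add: f0_def scalar_prod_def)
  also have "\<dots> = 1"
  proof -
    consider "r = i - 1" | "r = i" | "r \<noteq> i - 1" "r \<noteq> i" by auto
    then show ?thesis
    proof cases
      case 1
      have "(\<Sum>c\<in>{0..<n}. S $$ (r,c)) = S $$ (r, i-1) + S $$ (r, i)"
        by (rule sum_two) (use ii i r 1 in \<open>auto simp: S_def Smat_idx[OF _ _ i d]\<close>)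
      also have "\<dots> = 1" using ii i r 1 B1[OF d0 refl] by (simp add: S_def Smat_idx[OF _ _ i d])
      finally show ?thesis .
    next
      case 2
      have "(\<Sum>c\<in>{0..<n}. S $$ (r,c)) = S $$ (r, i-1) + S $$ (r, i)"
        by (rule sum_two) (use ii i r 2 in \<open>auto simp: S_def Smat_idx[OF _ _ i d]\<close>)
      also have "\<dots> = 1" using ii i r 2 B2[OF d0 refl] by (simp add: S_def Smat_idx[OF _ _ i d])
      finally show ?thesis .
    next
      case 3
      have "(\<Sum>c\<in>{0..<n}. S $$ (r,c)) = S $$ (r, r)"
        by (rule sum_one) (use ii i r 3 in \<open>auto simp: S_def Smat_idx[OF _ _ i d]\<close>)
      also have "\<dots> = 1" using ii i r 3 by (simp add: S_def Smat_idx[OF _ _ i d])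
      finally show ?thesis .
    qed
  qed
  finally show "(Smat n q1 q2 i *\<^sub>v f0 n) $ r = f0 n $ r" using r by (simp add: S_def f0_def)
qed

lemma Jf0: "gram n q *\<^sub>v f0 n = vec n (\<lambda>r. q ^ r)"
proof (rule eq_vecI)
  show "dim_vec (gram n q *\<^sub>v f0 n) = dim_vec (vec n (\<lambda>r. q ^ r))" by (simp add: gram_def)
  fix r assume "r < dim_vec (vec n (\<lambda>r. q ^ r))"
  then have r: "r < n" by simp
  have "(gram n q *\<^sub>v f0 n) $ r = (\<Sum>c\<in>{0..<n}. (if r = c then q ^ r else 0))"
    using r by (simp add: gram_def f0_def scalar_prod_def)
  also have "\<dots> = q ^ r" by (subst sum_one[where a=r]) (use r in auto)
  finally show "(gram n q *\<^sub>v f0 n) $ r = vec n (\<lambda>r. q ^ r) $ r" using r by simp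
qed

lemma bform_f0: "v \<in> carrier_vec n \<Longrightarrow> bform n q v (f0 n) = (\<Sum>r\<in>{0..<n}. v $ r * q ^ r)"
  by (simp add: bform_def Jf0 scalar_prod_def)

lemma part3:
  assumes q1: "q1 \<noteq> 0" and qq: "q = - q2 / q1" and i: "1 \<le> i" "i < n"
  shows "fvec n q1 q2 i \<in> Lperp n q"
proof -
  have C: "fvec n q1 q2 i \<in> carrier_vec n" by (simp add: fvec_def ebas_def)
  have ii: "i - 1 < n" "i - 1 \<noteq> i" using i by auto
  have idx: "fvec n q1 q2 i $ r = (if r = i - 1 then q2 else 0) + (if r = i then q1 else 0)" if "r < n" for r
    using that i by (simp add: fvec_def ebas_def)
  have "(\<Sum>r\<in>{0..<n}. fvec n q1 q2 i $ r * q ^ r) = fvec n q1 q2 i $ (i-1) * q ^ (i-1) + fvec n q1 q2 i $ i * q ^ i"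
    by (rule sum_two) (use ii i in \<open>auto simp: idx\<close>)
  also have "\<dots> = q2 * q ^ (i-1) + q1 * q ^ i" using ii i by (simp add: idx)
  also have "\<dots> = q ^ (i-1) * (q2 + q1 * q)"
    using i by (cases i) (auto simp: algebra_simps)
  also have "q2 + q1 * q = 0" unfolding qq using q1 by simp
  finally show ?thesis unfolding Lperp_def using C by (simp add: bform_f0)
qed

lemma colsum:
  assumes q1: "q1 \<noteq> 0" and qq: "q = - q2 / q1" and i: "1 \<le> i" "i < n" and c: "c < n"
  shows "(\<Sum>r\<in>{0..<n}. burau n q1 q2 i $$ (r,c) * q ^ r) = q1 * q ^ c"
proof -
  have ii: "i - 1 < n" "i - 1 \<noteq> i" using i by auto
  have qi: "q ^ i = q ^ (i-1) * q" using i by (cases i) auto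
  have h: "q2 + q1 * q = 0" unfolding qq using q1 by simp
  have B: "burau n q1 q2 i $$ (r,c) = (if c = i - 1 then (if r = i - 1 then q1 + q2 else if r = i then q1 else 0)
     else if c = i then (if r = i - 1 then - q2 else 0)
     else (if r = c then q1 else 0))" if "r < n" "c < n" for r c
    using that by (simp add: burau_def)
  consider "c = i - 1" | "c = i" | "c \<noteq> i - 1" "c \<noteq> i" by auto
  then show ?thesis
  proof cases
    case 1
    have "(\<Sum>r\<in>{0..<n}. burau n q1 q2 i $$ (r,c) * q ^ r) = (q1+q2) * q^(i-1) + q1 * q ^ i"
      by (subst sum_two[where a="i-1" and b=i]) (use ii i 1 in \<open>auto simp: B\<close>)
    also have "\<dots> = q1 * q ^ (i-1) + q ^ (i-1) * (q2 + q1 * q)" unfolding qi by (simp add: algebra_simps)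
    also have "\<dots> = q1 * q ^ c" using h 1 by simp
    finally show ?thesis .
  next
    case 2
    have "(\<Sum>r\<in>{0..<n}. burau n q1 q2 i $$ (r,c) * q ^ r) = - q2 * q^(i-1)"
      by (subst sum_one[where a="i-1"]) (use ii i 2 in \<open>auto simp: B\<close>)
    also have "\<dots> = q1 * q ^ (i-1) * q - q ^ (i-1) * (q2 + q1 * q)" by (simp add: algebra_simps)
    also have "\<dots> = q1 * q ^ c" using h 2 qi by simp
    finally show ?thesis .
  next
    case 3
    show ?thesis
      by (subst sum_one[where a=c]) (use ii i 3 c in \<open>auto simp: B\<close>)
  qed
qed

lemma part4:
  assumes q1: "q1 \<noteq> 0" and qq: "q = - q2 / q1" and i: "1 \<le> i" "i < n" and v: "v \<in> Lperp n q"
  shows "burau n q1 q2 i *\<^sub>v v \<in> Lperp n q"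
proof -
  have vc: "v \<in> carrier_vec n" and v0: "(\<Sum>r\<in>{0..<n}. v $ r * q ^ r) = 0"
    using v by (auto simp: Lperp_def bform_f0)
  have BC: "burau n q1 q2 i \<in> carrier_mat n n" by (simp add: burau_def)
  have C: "burau n q1 q2 i *\<^sub>v v \<in> carrier_vec n" using BC vc by simp
  have "(\<Sum>r\<in>{0..<n}. (burau n q1 q2 i *\<^sub>v v) $ r * q ^ r)
      = (\<Sum>r\<in>{0..<n}. (\<Sum>c\<in>{0..<n}. burau n q1 q2 i $$ (r,c) * v $ c) * q ^ r)"
    by (rule sum.cong) (use BC vc in \<open>auto simp: scalar_prod_def\<close>)
  also have "\<dots> = (\<Sum>c\<in>{0..<n}. v $ c * (\<Sum>r\<in>{0..<n}. burau n q1 q2 i $$ (r,c) * q ^ r))"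
  proof -
    have "(\<Sum>r\<in>{0..<n}. (\<Sum>c\<in>{0..<n}. burau n q1 q2 i $$ (r,c) * v $ c) * q ^ r)
        = (\<Sum>r\<in>{0..<n}. \<Sum>c\<in>{0..<n}. burau n q1 q2 i $$ (r,c) * v $ c * q ^ r)"
      by (simp add: sum_distrib_right)
    also have "\<dots> = (\<Sum>c\<in>{0..<n}. \<Sum>r\<in>{0..<n}. burau n q1 q2 i $$ (r,c) * v $ c * q ^ r)"
      by (rule sum.swap)
    also have "\<dots> = (\<Sum>c\<in>{0..<n}. v $ c * (\<Sum>r\<in>{0..<n}. burau n q1 q2 i $$ (r,c) * q ^ r))"
      by (simp add: sum_distrib_left mult.commute mult.left_commute)
    finally show ?thesis .
  qed
  also have "\<dots> = (\<Sum>c\<in>{0..<n}. v $ c * (q1 * q ^ c))"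
    by (rule sum.cong) (use colsum[OF q1 qq i] in auto)
  also have "\<dots> = q1 * (\<Sum>c\<in>{0..<n}. v $ c * q ^ c)"
    by (simp add: sum_distrib_left algebra_simps)
  also have "\<dots> = 0" using v0 by simp
  finally show ?thesis unfolding Lperp_def using C by (simp add: bform_f0)
qed

lemma Lperp_add: "v \<in> Lperp n q \<Longrightarrow> w \<in> Lperp n q \<Longrightarrow> v + w \<in> Lperp n q"
  by (auto simp: Lperp_def bform_f0 sum.distrib distrib_right)

lemma Lperp_smult: "v \<in> Lperp n q \<Longrightarrow> a \<cdot>\<^sub>v v \<in> Lperp n q"
proof -
  assume v: "v \<in> Lperp n q"
  then have vc: "v \<in> carrier_vec n" and v0: "(\<Sum>r\<in>{0..<n}. v $ r * q ^ r) = 0"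
    by (auto simp: Lperp_def bform_f0)
  have "(\<Sum>r\<in>{0..<n}. (a \<cdot>\<^sub>v v) $ r * q ^ r) = a * (\<Sum>r\<in>{0..<n}. v $ r * q ^ r)"
    using vc by (simp add: sum_distrib_left mult.assoc)
  then show ?thesis using vc v0 by (simp add: Lperp_def bform_f0)
qed

lemma Lperp_zero: "0\<^sub>v n \<in> Lperp n q"
  by (simp add: Lperp_def bform_f0)

lemma part5:
  assumes q1: "q1 \<noteq> 0" and q2: "q2 \<noteq> 0" and qq: "q = - q2 / q1" and n: "n \<ge> 2"
  shows "Fspan n q1 q2 = Lperp n q"
proof -
  interpret vec_space "TYPE(complex)" n .
  have Fd: "Fspan n q1 q2 = span (fvec n q1 q2 ` {1..<n})" unfolding Fspan_def by simp
  have W: "fvec n q1 q2 ` {1..<n} \<subseteq> carrier_vec n" by (auto simp: fvec_def ebas_def)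
  have q0: "q \<noteq> 0" using qq q1 q2 by simp
  have sub: "submodule class_ring (Lperp n q) V"
  proof -
    have "Lperp n q \<subseteq> carrier_vec n" by (auto simp: Lperp_def)
    then show ?thesis unfolding submodule_def using vec_module[of n]
      by (auto simp: Lperp_add Lperp_smult Lperp_zero)
  qed
  have F3: "fvec n q1 q2 ` {1..<n} \<subseteq> Lperp n q" using part3[OF q1 qq] by auto
  have "span (fvec n q1 q2 ` {1..<n}) \<subseteq> Lperp n q"
    by (rule span_is_subset[OF F3 sub])
  moreover have "Lperp n q \<subseteq> span (fvec n q1 q2 ` {1..<n})"
  proof
    fix v assume v: "v \<in> Lperp n q"
    then have vc: "v \<in> carrier_vec n" and v0: "(\<Sum>r\<in>{0..<n}. v $ r * q ^ r) = 0"
      by (auto simp: Lperp_def bform_f0)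
    define P where "P m = (\<Sum>r\<in>{0..<m}. v $ r * q ^ r)" for m
    define u where "u m = vec n (\<lambda>r. if r < m then v $ r else if r = m then - P m / q ^ m else 0)" for m
    have own: "fvec n q1 q2 k \<in> span (fvec n q1 q2 ` {1..<n})" if "1 \<le> k" "k < n" for k
      using in_own_span[OF W] that by auto
    have fidx: "fvec n q1 q2 (Suc m) $ r = (if r = m then q2 else 0) + (if r = Suc m then q1 else 0)"
      if "r < n" "Suc m < n" for r m
      using that by (simp add: fvec_def ebas_def)
    have h: "q * q1 = - q2" using qq q1 by simp
    have "q1 = (q * q1) / q" using q0 by simp
    also have "\<dots> = - q2 / q" using h by simp
    finally have q1': "q1 = - q2 / q" .
    have step: "u (Suc m) = u m + (P (Suc m) / (q2 * q ^ m)) \<cdot>\<^sub>v fvec n q1 q2 (Suc m)"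
      if m: "Suc m < n" for m
    proof (rule eq_vecI)
      show "dim_vec (u (Suc m)) = dim_vec (u m + (P (Suc m) / (q2 * q ^ m)) \<cdot>\<^sub>v fvec n q1 q2 (Suc m))"
        by (simp add: u_def fvec_def ebas_def)
      fix r assume "r < dim_vec (u m + (P (Suc m) / (q2 * q ^ m)) \<cdot>\<^sub>v fvec n q1 q2 (Suc m))"
      then have r: "r < n" by (simp add: fvec_def ebas_def)
      have PS: "P (Suc m) = P m + v $ m * q ^ m" by (simp add: P_def)
      have "u (Suc m) $ r = u m $ r + (P (Suc m) / (q2 * q ^ m)) * fvec n q1 q2 (Suc m) $ r"
      proof -
        consider "r < m" | "r = m" | "r = Suc m" | "r > Suc m" by linarith
        then show ?thesis
        proof cases
          case 1 then show ?thesis using r m by (simp add: u_def fidx)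
        next
          case 2 then show ?thesis using r m q0 q2 by (simp add: u_def fidx PS field_simps)
        next
          case 3 then show ?thesis using r m q0 q2 by (simp add: u_def fidx, simp add: q1' field_simps)
        next
          case 4 then show ?thesis using r m by (simp add: u_def fidx)
        qed
      qed
      then show "u (Suc m) $ r = (u m + (P (Suc m) / (q2 * q ^ m)) \<cdot>\<^sub>v fvec n q1 q2 (Suc m)) $ r"
        using r by (simp add: fvec_def ebas_def)
    qed
    have "m < n \<Longrightarrow> u m \<in> span (fvec n q1 q2 ` {1..<n})" for m
    proof (induction m)
      case 0
      have "u 0 = 0\<^sub>v n" by (rule eq_vecI) (auto simp: u_def P_def)
      then show ?case using span_zero by simp
    next
      case (Suc m)
      have "u m + (P (Suc m) / (q2 * q ^ m)) \<cdot>\<^sub>v fvec n q1 q2 (Suc m) \<in> span (fvec n q1 q2 ` {1..<n})"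
        using span_add1[OF W Suc.IH smult_in_span[OF W own]] Suc.prems by auto
      then show ?case using step[OF Suc.prems] by simp
    qed
    then have "u (n - 1) \<in> span (fvec n q1 q2 ` {1..<n})" using n by simp
    moreover have "u (n - 1) = v"
    proof (rule eq_vecI)
      show "dim_vec (u (n - 1)) = dim_vec v" using vc by (simp add: u_def)
      fix r assume "r < dim_vec v"
      then have r: "r < n" using vc by simp
      have Pn: "P n = P (n - 1) + v $ (n - 1) * q ^ (n - 1)"
        using n unfolding P_def by (cases n) auto
      have "P n = 0" using v0 by (simp add: P_def)
      then have e: "v $ (n - 1) * q ^ (n - 1) = - P (n - 1)" using Pn by (simp add: add_eq_0_iff)
      then have "- P (n - 1) / q ^ (n - 1) = v $ (n - 1)" using q0 by (metis nonzero_mult_div_cancel_right power_not_zero)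
      then show "u (n - 1) $ r = v $ r" using r by (auto simp: u_def)
    qed
    ultimately show "v \<in> span (fvec n q1 q2 ` {1..<n})" by simp
  qed
  ultimately show ?thesis using Fd by simp
qed

theorem lemma3p5:
  fixes n :: nat and q1 q2 :: complex
  assumes "n \<ge> 2" and "q1 * q2 \<noteq> 0" and "q1 \<noteq> q2"
  defines "q \<equiv> hq q1 q2"
  shows "\<forall>i \<in> {1..<n}.
      (Smat n q1 q2 i)\<^sup>T * gram n q * Smat n q1 q2 i = gram n q
    \<and> Smat n q1 q2 i *\<^sub>v f0 n = f0 n
    \<and> fvec n q1 q2 i \<in> Lperp n q
    \<and> (\<forall>v \<in> Lperp n q. burau n q1 q2 i *\<^sub>v v \<in> Lperp n q)
    \<and> Fspan n q1 q2 = Lperp n q"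
proof
  fix i assume i: "i \<in> {1..<n}"
  then have i1: "1 \<le> i" "i < n" by auto
  have q1: "q1 \<noteq> 0" and q2: "q2 \<noteq> 0" using assms(2) by auto
  have qq: "q = - q2 / q1" unfolding q_def hq_def by simp
  have qd: "q = hq q1 q2" unfolding q_def by simp
  show "(Smat n q1 q2 i)\<^sup>T * gram n q * Smat n q1 q2 i = gram n q
    \<and> Smat n q1 q2 i *\<^sub>v f0 n = f0 n
    \<and> fvec n q1 q2 i \<in> Lperp n q
    \<and> (\<forall>v \<in> Lperp n q. burau n q1 q2 i *\<^sub>v v \<in> Lperp n q)
    \<and> Fspan n q1 q2 = Lperp n q"
    using part1[OF q1 q2 assms(3) i1 qd] part2[OF assms(3) i1] part3[OF q1 qq i1]
      part4[OF q1 qq i1] part5[OF q1 q2 qq assms(1)] by blast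
qed

end
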